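(* Assume the setting in the context with Assumptions (A1), (A2), (A3). Let $0<\tau_2<1/\zeta$ (any $\tau_2>0$ if $\zeta=0$). For $y_t\in Y$ and $z_t\in\mathcal X$, let $y^+(z_t)=\mathrm{prox}_{\tau_2h}\big(y_t+\tau_2\nabla_y\tilde f(x^*(y_t,z_t),y_t)\big)$. Then $\|x^*(y^+(z_t),z_t)-x^*(z_t)\|^2\le\frac{3}{\mu(p-l)\tau_2^2}\big(1+\tau_2^2l^2+\gamma_2^2\tau_2^2l^2\big)\|y^+(z_t)-y_t\|^2$, where $\gamma_2=\frac{p+l}{p-l}$.
   Context: $\mathcal X=\mathbb R^{d_1\times r}$ (Frobenius norm), $\mathcal Y=\mathbb R^{d_2}$, $\mathcal M=\{x:x^\top x=I_r\}$, $c(x)=x^\top x-I_r$, $A(x)=x(\frac32I_r-\frac12x^\top x)$; $C>\frac12+\sup_{x\in\mathcal M}\|x\|$, $X=\{x:\|x\|\le C\}$, $\bar X=\{A(x):\|x\|\le C\}$. $\partial$ is the Fréchet subdifferential; $\mathrm{prox}_{\tau h}(v)=\arg\min_y\{\tau h(y)+\frac12\|y-v\|^2\}$. (A1) $h:\mathcal Y\to\mathbb R\cup\{+\infty\}$ proper, closed, $\zeta$-weakly convex ($h+\frac\zeta2\|\cdot\|^2$ convex), closed domain $Y$, locally Lipschitz on $Y$, $Y$ bounded. (A2) $f$ differentiable on an open set containing $\bar X\times Y$ with $\|\nabla_xf(x_1,y_1)-\nabla_xf(x_2,y_2)\|\le L_{xx}\|x_1-x_2\|+L_{xy}\|y_1-y_2\|$,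 $\|\nabla_yf(x_1,y_1)-\nabla_yf(x_2,y_2)\|\le L_{yx}\|x_1-x_2\|+L_{yy}\|y_1-y_2\|$ on $\bar X\times Y$. (A3) With $f_r=f-h$, there is $\mu>0$ with $\max_wf_r(x,w)-f_r(x,y)\le\frac1{2\mu}\mathrm{dist}^2(0,-\nabla_yf(x,y)+\partial h(y))$ for all $x\in\bar X,y\in Y$. For $\rho>0$: $\tilde f(x,y)=f(A(x),y)+\frac\rho4\|c(x)\|^2$, $\tilde f_r=\tilde f-h$; $l$ is the (blockwise) Lipschitz constant of $\nabla\tilde f$ on $X\times Y$; standing choice $p>l$. $\hat f(x,y;z)=\tilde f(x,y)+\frac p2\|x-z\|^2$, $\hat f_r=\hat f-h$, $\Phi(x;z)=\max_{y\in\mathcal Y}\hat f_r(x,y;z)$, $x^*(y,z)=\arg\min_{x\in X}\hat f(x,y;z)$, $x^*(z)=\arg\min_{x\in X}\Phi(x;z)$. *)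

theory Defs
  imports "HOL-Analysis.Analysis"
begin

text \<open>Matrices x in R^(d1 x r) are rendered as real^'r^'d1 (rows indexed by 'd1);
  the norm on this type is the Frobenius norm and the inner product the Frobenius one.
  The extended-valued h : Y -> R u {+oo} is rendered as a real-valued function h together
  with its (closed) domain Ydom; h is understood to be +oo outside Ydom.\<close>

definition cmap :: "real^'r^'d1 \<Rightarrow> real^'r^'r" where
  "cmap x = transpose x ** x - mat 1"

definition Amap :: "real^'r^'d1 \<Rightarrow> real^'r^'d1" where
  "Amap x = x ** ((3/2) *\<^sub>R mat 1 - (1/2) *\<^sub>R (transpose x ** x))"

definition stiefel :: "(real^'r^'d1) set" where
  "stiefel = {x. transpose x ** x = mat 1}"

definition frechet_subdiff :: "'a::real_inner set \<Rightarrow> ('a \<Rightarrow> real) \<Rightarrow> 'a \<Rightarrow> 'a set" where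
  "frechet_subdiff Ydom h y = {g. y \<in> Ydom \<and>
     (\<forall>\<epsilon>>0. \<exists>\<delta>>0. \<forall>y'\<in>Ydom. norm (y' - y) < \<delta> \<longrightarrow>
        h y' \<ge> h y + inner g (y' - y) - \<epsilon> * norm (y' - y))}"

definition ftilde :: "(real^'r^'d1 \<Rightarrow> 'y \<Rightarrow> real) \<Rightarrow> real \<Rightarrow> real^'r^'d1 \<Rightarrow> 'y \<Rightarrow> real" where
  "ftilde f \<rho> x y = f (Amap x) y + \<rho> / 4 * (norm (cmap x))\<^sup>2"

definition fhat :: "(real^'r^'d1 \<Rightarrow> 'y \<Rightarrow> real) \<Rightarrow> real \<Rightarrow> real \<Rightarrow> real^'r^'d1 \<Rightarrow> 'y \<Rightarrow> real^'r^'d1 \<Rightarrow> real" where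
  "fhat f \<rho> p x y z = ftilde f \<rho> x y + p / 2 * (norm (x - z))\<^sup>2"

text \<open>Phi(x;z) = max over y of fhat_r(x,y;z); since h = +oo off Ydom this is a sup over Ydom.\<close>
definition Phi :: "(real^'r^'d1 \<Rightarrow> 'y \<Rightarrow> real) \<Rightarrow> ('y \<Rightarrow> real) \<Rightarrow> 'y set \<Rightarrow> real \<Rightarrow> real \<Rightarrow> real^'r^'d1 \<Rightarrow> real^'r^'d1 \<Rightarrow> real" where
  "Phi f h Ydom \<rho> p x z = (SUP y\<in>Ydom. fhat f \<rho> p x y z - h y)"

definition prox_obj :: "('y::real_normed_vector \<Rightarrow> real) \<Rightarrow> real \<Rightarrow> 'y \<Rightarrow> 'y \<Rightarrow> real" where
  "prox_obj h \<tau> v y = \<tau> * h y + 1/2 * (norm (y - v))\<^sup>2"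

end

theory Submission
  imports Defs
begin

lemma seg_deriv:
  fixes F :: "'a::real_inner \<Rightarrow> 'b::real_inner \<Rightarrow> real"
  assumes "((\<lambda>(x,y). F x y) has_derivative (\<lambda>(dx,dy). inner G dx + inner H dy)) (at (a + t *\<^sub>R (b-a), y))"
  shows "((\<lambda>s. F (a + s *\<^sub>R (b-a)) y) has_real_derivative inner G (b-a)) (at t)"
proof -
  have d: "((\<lambda>s. (a + s *\<^sub>R (b-a), y)) has_derivative (\<lambda>h. (h *\<^sub>R (b-a), 0))) (at t)"
    by (auto intro!: derivative_eq_intros)
  have "((\<lambda>(x,y). F x y) \<circ> (\<lambda>s. (a + s *\<^sub>R (b-a), y)) has_derivative (\<lambda>(dx,dy). inner G dx + inner H dy) \<circ> (\<lambda>h. (h *\<^sub>R (b-a), 0))) (at t)"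
    by (rule diff_chain_at[OF d assms])
  moreover have "(\<lambda>(dx,dy). inner G dx + inner H dy) \<circ> (\<lambda>h. (h *\<^sub>R (b-a), 0)) = (\<lambda>h. inner G (b-a) * h)"
    by (auto simp: fun_eq_iff)
  ultimately show ?thesis
    by (simp add: has_field_derivative_def o_def)
qed

lemma partial_y:
  fixes F :: "'a::real_inner \<Rightarrow> 'b::real_inner \<Rightarrow> real"
  assumes "((\<lambda>(x,y). F x y) has_derivative (\<lambda>(dx,dy). inner G dx + inner H dy)) (at (x, y))"
  shows "((\<lambda>w. F x w) has_derivative (\<lambda>dw. inner H dw)) (at y)"
proof -
  have d: "((\<lambda>w. (x, w)) has_derivative (\<lambda>h. (0, h))) (at y)"
    by (auto intro!: derivative_eq_intros)
  have "((\<lambda>(x,y). F x y) \<circ> (\<lambda>w. (x, w)) has_derivative (\<lambda>(dx,dy). inner G dx + inner H dy) \<circ> (\<lambda>h. (0, h))) (at y)"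
    by (rule diff_chain_at[OF d assms])
  then show ?thesis by (simp add: o_def)
qed

lemma grad_unique:
  fixes F :: "'b::real_inner \<Rightarrow> real"
  assumes "(F has_derivative (\<lambda>dw. inner H dw)) (at y)" "(F has_derivative (\<lambda>dw. inner H' dw)) (at y)"
  shows "H = H'"
proof -
  have "(\<lambda>dw. inner H dw) = (\<lambda>dw. inner H' dw)" using has_derivative_unique[OF assms] .
  then have "inner H (H - H') = inner H' (H - H')" by metis
  then have "inner (H - H') (H - H') = 0" by (simp add: inner_diff_left)
  then show ?thesis by simp
qed

lemma quad_growth:
  fixes F :: "'a::real_normed_vector \<Rightarrow> real"
  assumes "\<forall>t. 0 < t \<and> t < 1 \<longrightarrow> F a \<le> F (a + t *\<^sub>R (b - a))"
    and "\<forall>t. 0 < t \<and> t < 1 \<longrightarrow> F (a + t *\<^sub>R (b - a)) \<le> (1-t) * F a + t * F b - c * t * (1-t) * D"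
  shows "c * D \<le> F b - F a"
proof -
  have key: "c * (1-t) * D \<le> F b - F a" if "0 < t" "t < 1" for t
  proof -
    have "F a \<le> (1-t) * F a + t * F b - c * t * (1-t) * D" using assms that by fastforce
    then have "t * (c * (1-t) * D) \<le> t * (F b - F a)" by (simp add: algebra_simps)
    then show ?thesis using that by simp
  qed
  show ?thesis
  proof (rule ccontr)
    assume "\<not> ?thesis"
    then have pos: "c * D - (F b - F a) > 0" by simp
    have fba: "F b - F a \<ge> (c * D) / 2" using key[of "1/2"] by (simp add: field_simps)
    then have cD: "c * D > 0" using pos by linarith
    define t where "t = min (1/2) ((c * D - (F b - F a)) / (2 * (c*D)))"
    have t0: "0 < t" "t < 1" using pos cD by (auto simp: t_def)
    have "t * (c * D) \<le> (c * D - (F b - F a)) / 2"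
    proof -
      have "t \<le> (c * D - (F b - F a)) / (2 * (c*D))" by (simp add: t_def)
      then have "t * (c*D) \<le> (c * D - (F b - F a)) / (2 * (c*D)) * (c * D)"
        using mult_right_mono[OF _ less_imp_le[OF cD]] by blast
      also have "\<dots> = (c * D - (F b - F a)) / 2"
      proof -
        have gen: "\<And>X k::real. k \<noteq> 0 \<Longrightarrow> X / (2*k) * k = X/2" by (simp add: field_simps)
        show ?thesis by (rule gen) (use cD in linarith)
      qed
      finally show ?thesis .
    qed
    moreover have "c * (1-t) * D \<le> F b - F a" using key t0 by simp
    ultimately show False using pos by (simp add: algebra_simps)
  qed
qed

lemma conv01:
  fixes \<phi> \<phi>' :: "real \<Rightarrow> real"
  assumes "\<And>t. 0 \<le> t \<Longrightarrow> t \<le> 1 \<Longrightarrow> (\<phi> has_real_derivative \<phi>' t) (at t)"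
    and "\<And>s t. 0 \<le> s \<Longrightarrow> s \<le> t \<Longrightarrow> t \<le> 1 \<Longrightarrow> \<phi>' s \<le> \<phi>' t"
    and "0 \<le> t" "t \<le> 1"
  shows "\<phi> t \<le> (1-t) * \<phi> 0 + t * \<phi> 1"
proof -
  have "convex_on {0..1} \<phi>"
    by (rule convex_on_realI[where f'="\<phi>'"]) (use assms in auto)
  from convex_onD[OF this, of t 0 1] assms(3,4) show ?thesis by simp
qed

lemma seg_in:
  assumes "convex X" "a \<in> X" "b \<in> X" "0 \<le> t" "t \<le> 1"
  shows "a + t *\<^sub>R (b - a) \<in> X"
proof -
  have "a + t *\<^sub>R (b - a) = (1 - t) *\<^sub>R a + t *\<^sub>R b" by (simp add: algebra_simps)
  then show ?thesis using assms convexD_alt by metis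
qed

lemma normsq_seg:
  fixes a b z :: "'a::real_inner"
  shows "(norm (a + s *\<^sub>R (b - a) - z))\<^sup>2 = (norm (a - z))\<^sup>2 + 2 * s * inner (a - z) (b - a) + s\<^sup>2 * (norm (b - a))\<^sup>2"
proof -
  have "a + s *\<^sub>R (b - a) - z = (a - z) + s *\<^sub>R (b - a)" by (simp add: algebra_simps)
  then show ?thesis unfolding power2_norm_eq_inner
    by (simp add: inner_add_left inner_add_right inner_diff_left inner_diff_right inner_commute power2_eq_square algebra_simps)
qed

lemma mvt_bound:
  fixes Ft :: "'a::real_inner \<Rightarrow> 'b::real_inner \<Rightarrow> real"
  assumes "convex X" "a \<in> X" "b \<in> X"
    and d1: "\<forall>x\<in>X. ((\<lambda>(x,y). Ft x y) has_derivative (\<lambda>(dx,dy). inner (Gx x y1) dx + inner (Gy x y1) dy)) (at (x,y1))"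
    and d2: "\<forall>x\<in>X. ((\<lambda>(x,y). Ft x y) has_derivative (\<lambda>(dx,dy). inner (Gx x y2) dx + inner (Gy x y2) dy)) (at (x,y2))"
    and B: "\<forall>x\<in>X. norm (Gx x y1 - Gx x y2) \<le> B"
  shows "(Ft b y1 - Ft b y2) - (Ft a y1 - Ft a y2) \<le> B * norm (b - a)"
proof -
  define \<psi> where "\<psi> s = Ft (a + s *\<^sub>R (b - a)) y1 - Ft (a + s *\<^sub>R (b - a)) y2" for s
  define \<psi>' where "\<psi>' s = inner (Gx (a + s *\<^sub>R (b - a)) y1 - Gx (a + s *\<^sub>R (b - a)) y2) (b - a)" for s
  have "(\<psi> has_real_derivative \<psi>' s) (at s)" if "0 \<le> s" "s \<le> 1" for s
  proof -
    have xs: "a + s *\<^sub>R (b - a) \<in> X" using seg_in assms that by blast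
    show ?thesis unfolding \<psi>_def \<psi>'_def inner_diff_left
      by (intro DERIV_diff seg_deriv) (use d1 d2 xs in auto)
  qed
  then obtain \<xi> where \<xi>: "0 < \<xi>" "\<xi> < 1" "\<psi> 1 - \<psi> 0 = (1 - 0) * \<psi>' \<xi>"
    using MVT2[of 0 1 \<psi> \<psi>'] by auto
  have xs: "a + \<xi> *\<^sub>R (b - a) \<in> X" by (rule seg_in[OF assms(1-3)]) (use \<xi> in auto)
  have "\<psi>' \<xi> \<le> norm (Gx (a + \<xi> *\<^sub>R (b - a)) y1 - Gx (a + \<xi> *\<^sub>R (b - a)) y2) * norm (b - a)"
    unfolding \<psi>'_def by (rule norm_cauchy_schwarz)
  also have "\<dots> \<le> B * norm (b - a)" using B xs by (simp add: mult_right_mono)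
  finally show ?thesis using \<xi> by (simp add: \<psi>_def)
qed

lemma fhat_strong:
  fixes Ft :: "'a::real_inner \<Rightarrow> 'b::real_inner \<Rightarrow> real"
  assumes "convex X" "a \<in> X" "b \<in> X" "0 \<le> t" "t \<le> 1"
    and d: "\<forall>x\<in>X. ((\<lambda>(x,y). Ft x y) has_derivative (\<lambda>(dx,dy). inner (Gx x y) dx + inner (Gy x y) dy)) (at (x,y))"
    and lip: "\<forall>x1\<in>X. \<forall>x2\<in>X. norm (Gx x1 y - Gx x2 y) \<le> l * norm (x1 - x2)"
  shows "Ft (a + t *\<^sub>R (b - a)) y + p/2 * (norm (a + t *\<^sub>R (b - a) - z))\<^sup>2
     \<le> (1-t) * (Ft a y + p/2 * (norm (a - z))\<^sup>2) + t * (Ft b y + p/2 * (norm (b - z))\<^sup>2)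
        - (p - l)/2 * t * (1 - t) * (norm (b - a))\<^sup>2"
proof -
  define D where "D = (norm (b - a))\<^sup>2"
  define c0 where "c0 = (norm (a - z))\<^sup>2"
  define c1 where "c1 = inner (a - z) (b - a)"
  define \<phi> where "\<phi> s = Ft (a + s *\<^sub>R (b - a)) y + p/2 * (c0 + 2 * s * c1 + s\<^sup>2 * D) - (p - l)/2 * s\<^sup>2 * D" for s
  define \<phi>' where "\<phi>' s = inner (Gx (a + s *\<^sub>R (b - a)) y) (b - a) + p/2 * (2 * c1 + 2 * s * D) - (p - l) * s * D" for s
  have der: "(\<phi> has_real_derivative \<phi>' s) (at s)" if "0 \<le> s" "s \<le> 1" for s
  proof -
    have xs: "a + s *\<^sub>R (b - a) \<in> X" using seg_in assms that by blast
    have "((\<lambda>s. Ft (a + s *\<^sub>R (b - a)) y) has_real_derivative inner (Gx (a + s *\<^sub>R (b - a)) y) (b - a)) (at s)"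
      by (rule seg_deriv) (use d xs in auto)
    then show ?thesis unfolding \<phi>_def \<phi>'_def
      by (auto intro!: derivative_eq_intros simp: power2_eq_square field_simps)
  qed
  have mono: "\<phi>' s \<le> \<phi>' u" if "0 \<le> s" "s \<le> u" "u \<le> 1" for s u
  proof -
    have xs: "a + s *\<^sub>R (b - a) \<in> X" "a + u *\<^sub>R (b - a) \<in> X"
      by (rule seg_in[OF assms(1-3)]; use that in linarith)+
    have nd: "norm ((a + u *\<^sub>R (b - a)) - (a + s *\<^sub>R (b - a))) = (u - s) * norm (b - a)"
    proof -
      have "(a + u *\<^sub>R (b - a)) - (a + s *\<^sub>R (b - a)) = (u - s) *\<^sub>R (b - a)" by (simp add: algebra_simps)
      then show ?thesis using that by simp
    qed
    have "- inner (Gx (a + u *\<^sub>R (b - a)) y - Gx (a + s *\<^sub>R (b - a)) y) (b - a)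
        \<le> norm (Gx (a + u *\<^sub>R (b - a)) y - Gx (a + s *\<^sub>R (b - a)) y) * norm (b - a)"
      using Cauchy_Schwarz_ineq2 abs_le_D2 by blast
    also have "\<dots> \<le> l * ((u - s) * norm (b - a)) * norm (b - a)"
      using lip xs nd by (metis mult_right_mono norm_ge_zero)
    finally have "- inner (Gx (a + u *\<^sub>R (b - a)) y - Gx (a + s *\<^sub>R (b - a)) y) (b - a) \<le> l * (u - s) * D"
      by (simp add: D_def power2_eq_square algebra_simps)
    then show ?thesis unfolding \<phi>'_def by (simp add: inner_diff_left algebra_simps)
  qed
  have ineq: "\<phi> t \<le> (1-t) * \<phi> 0 + t * \<phi> 1"
    by (rule conv01[of \<phi> \<phi>']) (use der mono assms(4,5) in auto)
  have n1: "(norm (a + t *\<^sub>R (b - a) - z))\<^sup>2 = c0 + 2 * t * c1 + t\<^sup>2 * D"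
    unfolding c0_def c1_def D_def by (rule normsq_seg)
  have n2: "(norm (b - z))\<^sup>2 = c0 + 2 * c1 + D"
    using normsq_seg[of a 1 b z] unfolding c0_def c1_def D_def by simp
  show ?thesis unfolding n1 n2 D_def[symmetric] c0_def[symmetric] using ineq unfolding \<phi>_def
    by (simp add: field_simps power2_eq_square)
qed

lemma prox_subgrad:
  fixes h :: "'a::real_inner \<Rightarrow> real"
  assumes tau: "\<tau> > 0" and yp: "is_arg_min (prox_obj h \<tau> v) (\<lambda>y. y \<in> Y) yp"
  shows "(1/\<tau>) *\<^sub>R (v - yp) \<in> frechet_subdiff Y h yp"
proof -
  have ypY: "yp \<in> Y" using yp by (simp add: is_arg_min_def)
  have key: "h y' \<ge> h yp + inner ((1/\<tau>) *\<^sub>R (v - yp)) (y' - yp) - (1/(2*\<tau>)) * (norm (y' - yp))\<^sup>2"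
    if y': "y' \<in> Y" for y'
  proof -
    have "\<tau> * h yp + 1/2 * (norm (yp - v))\<^sup>2 \<le> \<tau> * h y' + 1/2 * (norm (y' - v))\<^sup>2"
      using yp y' unfolding is_arg_min_def prox_obj_def by (metis not_less)
    moreover have "(norm (y' - v))\<^sup>2 = (norm (y' - yp))\<^sup>2 + 2 * inner (y' - yp) (yp - v) + (norm (yp - v))\<^sup>2"
    proof -
      have "y' - v = (y' - yp) + (yp - v)" by simp
      then show ?thesis unfolding power2_norm_eq_inner
        by (metis (no_types) inner_add_left inner_add_right inner_commute add.assoc mult_2 add.commute add.left_commute)
    qed
    ultimately have "\<tau> * h y' \<ge> \<tau> * h yp - 1/2 * (norm (y' - yp))\<^sup>2 - inner (y' - yp) (yp - v)"
      by linarith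
    then have "\<tau> * h y' \<ge> \<tau> * (h yp + inner ((1/\<tau>) *\<^sub>R (v - yp)) (y' - yp) - (1/(2*\<tau>)) * (norm (y' - yp))\<^sup>2)"
      using tau by (simp add: algebra_simps inner_diff_left inner_diff_right inner_commute)
    then show ?thesis using tau by simp
  qed
  show ?thesis unfolding frechet_subdiff_def
  proof (intro CollectI conjI ypY allI impI)
    fix \<epsilon> :: real assume e: "\<epsilon> > 0"
    show "\<exists>\<delta>>0. \<forall>y'\<in>Y. norm (y' - yp) < \<delta> \<longrightarrow>
        h y' \<ge> h yp + inner ((1/\<tau>) *\<^sub>R (v - yp)) (y' - yp) - \<epsilon> * norm (y' - yp)"
    proof (intro exI[of _ "2 * \<tau> * \<epsilon>"] conjI ballI impI)
      show "2 * \<tau> * \<epsilon> > 0" using tau e by simp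
      fix y' assume y': "y' \<in> Y" and n: "norm (y' - yp) < 2 * \<tau> * \<epsilon>"
      have "(1/(2*\<tau>)) * (norm (y' - yp))\<^sup>2 = (norm (y' - yp) / (2*\<tau>)) * norm (y' - yp)"
        by (simp add: power2_eq_square)
      also have "\<dots> \<le> \<epsilon> * norm (y' - yp)"
        using n tau by (intro mult_right_mono) (auto simp: field_simps)
      finally show "h y' \<ge> h yp + inner ((1/\<tau>) *\<^sub>R (v - yp)) (y' - yp) - \<epsilon> * norm (y' - yp)"
        using key[OF y'] by linarith
    qed
  qed
qed

lemma loclip_cont:
  fixes h :: "'a::real_normed_vector \<Rightarrow> real"
  assumes "\<forall>y\<in>Y. \<exists>\<delta>>0. \<exists>L. \<forall>a\<in>Y. \<forall>b\<in>Y.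
                       norm (a - y) < \<delta> \<longrightarrow> norm (b - y) < \<delta> \<longrightarrow> \<bar>h a - h b\<bar> \<le> L * norm (a - b)"
  shows "continuous_on Y h"
  unfolding continuous_on_iff
proof (intro ballI allI impI)
  fix y and e :: real assume y: "y \<in> Y" and e: "e > 0"
  obtain \<delta> L where d: "\<delta> > 0" and L: "\<forall>a\<in>Y. \<forall>b\<in>Y.
                       norm (a - y) < \<delta> \<longrightarrow> norm (b - y) < \<delta> \<longrightarrow> \<bar>h a - h b\<bar> \<le> L * norm (a - b)"
    using assms y by blast
  show "\<exists>d>0. \<forall>x'\<in>Y. dist x' y < d \<longrightarrow> dist (h x') (h y) < e"
  proof (intro exI[of _ "min \<delta> (e / (\<bar>L\<bar> + 1))"] conjI ballI impI)
    show "min \<delta> (e / (\<bar>L\<bar> + 1)) > 0" using d e by simp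
    fix x' assume x': "x' \<in> Y" and dx: "dist x' y < min \<delta> (e / (\<bar>L\<bar> + 1))"
    have "\<bar>h x' - h y\<bar> \<le> L * norm (x' - y)" using L x' y d dx by (auto simp: dist_norm)
    also have "\<dots> \<le> \<bar>L\<bar> * norm (x' - y)" by (simp add: mult_right_mono)
    also have "\<dots> \<le> \<bar>L\<bar> * (e / (\<bar>L\<bar> + 1))" using dx by (intro mult_left_mono) (auto simp: dist_norm)
    also have "\<dots> < e" using e by (simp add: field_simps)
    finally show "dist (h x') (h y) < e" by (simp add: dist_norm)
  qed
qed

lemma sup_shift:
  fixes g :: "'a \<Rightarrow> real"
  assumes "Y \<noteq> {}" "bdd_above (g ` Y)"
  shows "(SUP y\<in>Y. g y + K) = (SUP y\<in>Y. g y) + K"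
proof (rule antisym)
  show "(SUP y\<in>Y. g y + K) \<le> (SUP y\<in>Y. g y) + K"
    using assms by (intro cSUP_least) (auto intro: cSUP_upper)
  have "(SUP y\<in>Y. g y) \<le> (SUP y\<in>Y. g y + K) - K"
  proof (intro cSUP_least assms(1))
    fix y assume "y \<in> Y"
    moreover have "bdd_above ((\<lambda>y. g y + K) ` Y)"
    proof -
      obtain M where "\<And>y. y \<in> Y \<Longrightarrow> g y \<le> M" using assms(2) by (auto simp: bdd_above_def)
      then show ?thesis by (intro bdd_aboveI2[of _ _ "M + K"]) auto
    qed
    ultimately have "g y + K \<le> (SUP y\<in>Y. g y + K)" by (intro cSUP_upper)
    then show "g y \<le> (SUP y\<in>Y. g y + K) - K" by simp
  qed
  then show "(SUP y\<in>Y. g y) + K \<le> (SUP y\<in>Y. g y + K)" by simp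
qed

lemma final_alg:
  fixes D1 N d e M l p \<mu> \<tau> :: real
  assumes mu: "\<mu> > 0" and pl: "p > l" and tau: "\<tau> > 0" and d0: "d \<ge> 0" and e0: "e \<ge> 0" and N0: "N \<ge> 0"
    and a1: "(p-l)/2 * D1\<^sup>2 \<le> 1/(2*\<mu>) * N\<^sup>2"
    and a2: "N \<le> d/\<tau> + M" and a3: "M \<le> l*e + l*d" and a4: "(p-l)*e\<^sup>2 \<le> l*d*e"
  shows "D1\<^sup>2 \<le> 3 / (\<mu> * (p - l) * \<tau>\<^sup>2) * (1 + \<tau>\<^sup>2 * l\<^sup>2 + ((p + l) / (p - l))\<^sup>2 * \<tau>\<^sup>2 * l\<^sup>2) * d\<^sup>2"
proof -
  define \<gamma> where "\<gamma> = (p + l) / (p - l)"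
  have h1: "l\<^sup>2 * e\<^sup>2 \<le> \<gamma>\<^sup>2 * l\<^sup>2 * d\<^sup>2"
  proof (cases "l > 0 \<and> e > 0")
    case True
    then have "(p-l)*e \<le> l*d" using a4 by (simp add: power2_eq_square)
    then have "e \<le> l*d/(p-l)" using pl by (simp add: field_simps)
    also have "\<dots> \<le> (p+l)*d/(p-l)" using pl True d0 by (intro divide_right_mono mult_right_mono) auto
    finally have "e \<le> \<gamma> * d" by (simp add: \<gamma>_def)
    then have "e\<^sup>2 \<le> (\<gamma>*d)\<^sup>2" using e0 by (intro power_mono) auto
    then have "l\<^sup>2 * e\<^sup>2 \<le> l\<^sup>2 * (\<gamma>*d)\<^sup>2" by (intro mult_left_mono) auto
    then show ?thesis by (simp add: power_mult_distrib algebra_simps)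
  next
    case False
    then have "l \<le> 0 \<or> e = 0" using e0 by auto
    then have "e = 0 \<or> l = 0"
    proof
      assume l: "l \<le> 0"
      have "l*d*e \<le> 0" using l d0 e0 by (simp add: mult_nonpos_nonneg)
      then have "(p-l)*e\<^sup>2 \<le> 0" using a4 by linarith
      then have "e\<^sup>2 \<le> 0" using pl by (simp add: mult_le_0_iff)
      then show ?thesis by simp
    qed simp
    then show ?thesis by auto
  qed
  have S0: "0 \<le> d/\<tau> + l*e + l*d" using N0 a2 a3 by linarith
  have "N\<^sup>2 \<le> (d/\<tau> + l*e + l*d)\<^sup>2" using N0 a2 a3 by (intro power_mono) auto
  also have "\<dots> \<le> 3 * ((d/\<tau>)\<^sup>2 + (l*e)\<^sup>2 + (l*d)\<^sup>2)"
  proof -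
    have three: "(u+v+w)\<^sup>2 \<le> 3*(u\<^sup>2+v\<^sup>2+w\<^sup>2)" for u v w :: real
    proof -
      have "0 \<le> (u-v)\<^sup>2 + (v-w)\<^sup>2 + (u-w)\<^sup>2" by simp
      then show ?thesis by (simp add: power2_eq_square algebra_simps)
    qed
    show ?thesis by (rule three)
  qed
  also have "\<dots> \<le> 3 * ((d/\<tau>)\<^sup>2 + \<gamma>\<^sup>2 * l\<^sup>2 * d\<^sup>2 + (l*d)\<^sup>2)"
    using h1 by (simp add: power_mult_distrib)
  finally have N2: "N\<^sup>2 \<le> 3 * ((d/\<tau>)\<^sup>2 + \<gamma>\<^sup>2 * l\<^sup>2 * d\<^sup>2 + (l*d)\<^sup>2)" .
  have "D1\<^sup>2 \<le> N\<^sup>2 / (\<mu> * (p - l))"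
    using a1 mu pl by (simp add: field_simps)
  also have "\<dots> \<le> 3 * ((d/\<tau>)\<^sup>2 + \<gamma>\<^sup>2 * l\<^sup>2 * d\<^sup>2 + (l*d)\<^sup>2) / (\<mu> * (p - l))"
    using N2 mu pl by (intro divide_right_mono) auto
  also have "\<dots> = 3 / (\<mu> * (p - l) * \<tau>\<^sup>2) * (1 + \<tau>\<^sup>2 * l\<^sup>2 + \<gamma>\<^sup>2 * \<tau>\<^sup>2 * l\<^sup>2) * d\<^sup>2"
    using mu pl tau by (simp add: field_simps power2_eq_square)
  finally show ?thesis by (simp add: \<gamma>_def)
qed

theorem lemma9:
  fixes f :: "real^'r::finite^'d1::finite \<Rightarrow> real^'d2::finite \<Rightarrow> real"
    and gx :: "real^'r^'d1 \<Rightarrow> real^'d2 \<Rightarrow> real^'r^'d1"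
    and gy :: "real^'r^'d1 \<Rightarrow> real^'d2 \<Rightarrow> real^'d2"
    and gtx :: "real^'r^'d1 \<Rightarrow> real^'d2 \<Rightarrow> real^'r^'d1"
    and gty :: "real^'r^'d1 \<Rightarrow> real^'d2 \<Rightarrow> real^'d2"
    and h :: "real^'d2 \<Rightarrow> real"
    and Y :: "(real^'d2) set"
    and C \<zeta> Lxx Lxy Lyx Lyy \<mu> \<rho> l p \<tau>2 :: real
    and yt :: "real^'d2" and zt :: "real^'r^'d1"
    and xt x1 xs :: "real^'r^'d1" and yp :: "real^'d2"
  defines "X \<equiv> cball (0::real^'r^'d1) C"
    and "Xbar \<equiv> Amap ` cball (0::real^'r^'d1) C"
  assumes dims: "CARD('r) \<le> CARD('d1)"
    and C: "C > 1/2 + (SUP x\<in>(stiefel::(real^'r^'d1) set). norm x)"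
    \<comment> \<open>(A1)\<close>
    and A1_proper: "Y \<noteq> {}"
    and A1_closed: "closed Y"
    and A1_bounded: "bounded Y"
    and A1_zeta: "\<zeta> \<ge> 0"
    and A1_weakly_convex: "convex Y" "convex_on Y (\<lambda>y. h y + \<zeta> / 2 * (norm y)\<^sup>2)"
    and A1_loclip: "\<forall>y\<in>Y. \<exists>\<delta>>0. \<exists>L. \<forall>a\<in>Y. \<forall>b\<in>Y.
                       norm (a - y) < \<delta> \<longrightarrow> norm (b - y) < \<delta> \<longrightarrow> \<bar>h a - h b\<bar> \<le> L * norm (a - b)"
    \<comment> \<open>(A2)\<close>
    and A2_diff: "\<exists>U. open U \<and> Xbar \<times> Y \<subseteq> U \<and>
        (\<forall>(x,y)\<in>U. ((\<lambda>(x,y). f x y) has_derivative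
                      (\<lambda>(dx,dy). inner (gx x y) dx + inner (gy x y) dy)) (at (x,y)))"
    and A2_lipx: "\<forall>x1\<in>Xbar. \<forall>y1\<in>Y. \<forall>x2\<in>Xbar. \<forall>y2\<in>Y.
        norm (gx x1 y1 - gx x2 y2) \<le> Lxx * norm (x1 - x2) + Lxy * norm (y1 - y2)"
    and A2_lipy: "\<forall>x1\<in>Xbar. \<forall>y1\<in>Y. \<forall>x2\<in>Xbar. \<forall>y2\<in>Y.
        norm (gy x1 y1 - gy x2 y2) \<le> Lyx * norm (x1 - x2) + Lyy * norm (y1 - y2)"
    \<comment> \<open>(A3)\<close>
    and A3_mu: "\<mu> > 0"
    and A3: "\<forall>x\<in>Xbar. \<forall>y\<in>Y. frechet_subdiff Y h y \<noteq> {} \<longrightarrow>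
        (SUP w\<in>Y. f x w - h w) - (f x y - h y)
          \<le> 1 / (2 * \<mu>) * (infdist 0 ((\<lambda>g. - gy x y + g) ` frechet_subdiff Y h y))\<^sup>2"
    \<comment> \<open>reformulation parameters; gtx, gty are the partial gradients of ftilde on X x Y,
        and l is a blockwise Lipschitz constant of them on X x Y\<close>
    and rho: "\<rho> > 0"
    and grad_ftilde: "\<forall>x\<in>X. \<forall>y\<in>Y. ((\<lambda>(x,y). ftilde f \<rho> x y) has_derivative
                      (\<lambda>(dx,dy). inner (gtx x y) dx + inner (gty x y) dy)) (at (x,y))"
    and l_lipx: "\<forall>x1\<in>X. \<forall>y1\<in>Y. \<forall>x2\<in>X. \<forall>y2\<in>Y.
        norm (gtx x1 y1 - gtx x2 y2) \<le> l * norm (x1 - x2) + l * norm (y1 - y2)"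
    and l_lipy: "\<forall>x1\<in>X. \<forall>y1\<in>Y. \<forall>x2\<in>X. \<forall>y2\<in>Y.
        norm (gty x1 y1 - gty x2 y2) \<le> l * norm (x1 - x2) + l * norm (y1 - y2)"
    and p_l: "p > l"
    \<comment> \<open>step size\<close>
    and tau_pos: "\<tau>2 > 0"
    and tau_zeta: "\<zeta> > 0 \<longrightarrow> \<tau>2 < 1 / \<zeta>"
    \<comment> \<open>the iterate and the argmins\<close>
    and yt: "yt \<in> Y"
    and xt: "is_arg_min (\<lambda>x. fhat f \<rho> p x yt zt) (\<lambda>x. x \<in> X) xt"
    and yp: "is_arg_min (prox_obj h \<tau>2 (yt + \<tau>2 *\<^sub>R gty xt yt)) (\<lambda>y. y \<in> Y) yp"
    and x1: "is_arg_min (\<lambda>x. fhat f \<rho> p x yp zt) (\<lambda>x. x \<in> X) x1"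
    and xs: "is_arg_min (\<lambda>x. Phi f h Y \<rho> p x zt) (\<lambda>x. x \<in> X) xs"
  shows "(norm (x1 - xs))\<^sup>2
     \<le> 3 / (\<mu> * (p - l) * \<tau>2\<^sup>2)
        * (1 + \<tau>2\<^sup>2 * l\<^sup>2 + ((p + l) / (p - l))\<^sup>2 * \<tau>2\<^sup>2 * l\<^sup>2) * (norm (yp - yt))\<^sup>2"
proof -
  let ?c = "(p - l) / 2"
  let ?fh = "\<lambda>x y. fhat f \<rho> p x y zt"
  let ?Ph = "\<lambda>x. Phi f h Y \<rho> p x zt"
  have Xc: "convex X" unfolding X_def by (rule convex_cball)
  have xtX: "xt \<in> X" using xt by (simp add: is_arg_min_def)
  have x1X: "x1 \<in> X" using x1 by (simp add: is_arg_min_def)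
  have xsX: "xs \<in> X" using xs by (simp add: is_arg_min_def)
  have ypY: "yp \<in> Y" using yp by (simp add: is_arg_min_def)
  have xtmin: "\<And>x. x \<in> X \<Longrightarrow> ?fh xt yt \<le> ?fh x yt" using xt by (metis is_arg_min_def not_less)
  have x1min: "\<And>x. x \<in> X \<Longrightarrow> ?fh x1 yp \<le> ?fh x yp" using x1 by (metis is_arg_min_def not_less)
  have xsmin: "\<And>x. x \<in> X \<Longrightarrow> ?Ph xs \<le> ?Ph x" using xs by (metis is_arg_min_def not_less)
  have AX: "\<And>x. x \<in> X \<Longrightarrow> Amap x \<in> Xbar" unfolding X_def Xbar_def by auto
  obtain U where U: "open U" "Xbar \<times> Y \<subseteq> U" "\<forall>(x,y)\<in>U. ((\<lambda>(x,y). f x y) has_derivative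
                      (\<lambda>(dx,dy). inner (gx x y) dx + inner (gy x y) dy)) (at (x,y))"
    using A2_diff by blast
  have fder: "((\<lambda>(x,y). f x y) has_derivative (\<lambda>(dx,dy). inner (gx (Amap x) w) dx + inner (gy (Amap x) w) dy)) (at (Amap x, w))"
    if "x \<in> X" "w \<in> Y" for x w
  proof -
    have "(Amap x, w) \<in> U" using U(2) AX[OF that(1)] that(2) by blast
    then show ?thesis using U(3) by blast
  qed
  have hcont: "continuous_on Y h" by (rule loclip_cont[OF A1_loclip])
  have Ycomp: "compact Y" using A1_closed A1_bounded by (simp add: compact_eq_bounded_closed)
  have fcont: "continuous_on Y (\<lambda>w. f (Amap x) w)" if "x \<in> X" for x
  proof (rule continuous_at_imp_continuous_on, intro ballI)
    fix w assume w: "w \<in> Y"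
    have c1: "isCont (\<lambda>(x,y). f x y) (Amap x, w)"
      by (rule has_derivative_continuous[OF fder[OF that w]])
    have "isCont ((\<lambda>(x,y). f x y) \<circ> (\<lambda>w. (Amap x, w))) w"
      by (rule continuous_at_compose) (use c1 in \<open>auto intro!: continuous_intros\<close>)
    then show "isCont (\<lambda>w. f (Amap x) w) w" by (simp add: o_def)
  qed
  define fr where "fr x w = f (Amap x) w - h w" for x w
  have bdd: "bdd_above (fr x ` Y)" if "x \<in> X" for x
  proof -
    have "continuous_on Y (fr x)" unfolding fr_def
      by (intro continuous_on_diff fcont[OF that] hcont)
    then show ?thesis
      by (intro bounded_imp_bdd_above compact_imp_bounded compact_continuous_image Ycomp)
  qed
  define K where "K x = \<rho>/4 * (norm (cmap x))\<^sup>2 + p/2 * (norm (x - zt))\<^sup>2" for x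
  have fhat_eq: "?fh x y - h y = fr x y + K x" for x y
    by (simp add: fhat_def ftilde_def fr_def K_def)
  have Phi_eq: "?Ph x = (SUP w\<in>Y. fr x w) + K x" if "x \<in> X" for x
    unfolding Phi_def fhat_eq by (rule sup_shift[OF A1_proper bdd[OF that]])
  have Phi_upper: "?fh x y - h y \<le> ?Ph x" if "x \<in> X" "y \<in> Y" for x y
    unfolding Phi_eq[OF that(1)] fhat_eq using cSUP_upper[OF that(2) bdd[OF that(1)]] by simp
  have fhat_seg: "?fh (a + t *\<^sub>R (b - a)) y \<le> (1-t) * ?fh a y + t * ?fh b y - ?c * t * (1-t) * (norm (b - a))\<^sup>2"
    if y: "y \<in> Y" and ab: "a \<in> X" "b \<in> X" and t: "0 \<le> t" "t \<le> 1" for y a b t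
  proof -
    have d: "\<forall>x\<in>X. ((\<lambda>(x,y). ftilde f \<rho> x y) has_derivative (\<lambda>(dx,dy). inner (gtx x y) dx + inner (gty x y) dy)) (at (x,y))"
      using grad_ftilde y by blast
    have lip: "\<forall>x1\<in>X. \<forall>x2\<in>X. norm (gtx x1 y - gtx x2 y) \<le> l * norm (x1 - x2)"
      using l_lipx y by fastforce
    show ?thesis unfolding fhat_def
      using fhat_strong[where Ft="ftilde f \<rho>" and Gx=gtx and Gy=gty and y=y and l=l and p=p and z=zt, OF Xc ab t d lip] by simp
  qed
  have Phi_seg: "?Ph (a + t *\<^sub>R (b - a)) \<le> (1-t) * ?Ph a + t * ?Ph b - ?c * t * (1-t) * (norm (b - a))\<^sup>2"
    if ab: "a \<in> X" "b \<in> X" and t: "0 \<le> t" "t \<le> 1" for a b t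
  proof -
    have "(SUP y\<in>Y. ?fh (a + t *\<^sub>R (b - a)) y - h y) \<le> (1-t) * ?Ph a + t * ?Ph b - ?c * t * (1-t) * (norm (b - a))\<^sup>2"
    proof (rule cSUP_least[OF A1_proper])
      fix y assume y: "y \<in> Y"
      have "?fh (a + t *\<^sub>R (b - a)) y - h y \<le> (1-t) * (?fh a y - h y) + t * (?fh b y - h y) - ?c * t * (1-t) * (norm (b - a))\<^sup>2"
        using fhat_seg[OF y ab t] by (simp add: algebra_simps)
      also have "\<dots> \<le> (1-t) * ?Ph a + t * ?Ph b - ?c * t * (1-t) * (norm (b - a))\<^sup>2"
        using Phi_upper[OF ab(1) y] Phi_upper[OF ab(2) y] t
        by (intro diff_right_mono add_mono mult_left_mono) auto
      finally show "?fh (a + t *\<^sub>R (b - a)) y - h y \<le> (1-t) * ?Ph a + t * ?Ph b - ?c * t * (1-t) * (norm (b - a))\<^sup>2" .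
    qed
    then show ?thesis by (simp add: Phi_def)
  qed
  have grPhi: "?c * (norm (x1 - xs))\<^sup>2 \<le> ?Ph x1 - ?Ph xs"
    by (rule quad_growth[where F="?Ph"])
      (use xsmin seg_in[OF Xc xsX x1X] Phi_seg[OF xsX x1X] in auto)
  have gryt: "?c * (norm (x1 - xt))\<^sup>2 \<le> ?fh x1 yt - ?fh xt yt"
    by (rule quad_growth[where F="\<lambda>x. ?fh x yt"])
      (use xtmin seg_in[OF Xc xtX x1X] fhat_seg[OF yt xtX x1X] in auto)
  have gryp: "?c * (norm (xt - x1))\<^sup>2 \<le> ?fh xt yp - ?fh x1 yp"
    by (rule quad_growth[where F="\<lambda>x. ?fh x yp"])
      (use x1min seg_in[OF Xc x1X xtX] fhat_seg[OF ypY x1X xtX] in auto)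
  have mvt: "(ftilde f \<rho> x1 yt - ftilde f \<rho> x1 yp) - (ftilde f \<rho> xt yt - ftilde f \<rho> xt yp) \<le> (l * norm (yt - yp)) * norm (x1 - xt)"
  proof (rule mvt_bound[OF Xc xtX x1X])
    show "\<forall>x\<in>X. ((\<lambda>(x,y). ftilde f \<rho> x y) has_derivative (\<lambda>(dx,dy). inner (gtx x yt) dx + inner (gty x yt) dy)) (at (x,yt))"
      using grad_ftilde yt by blast
    show "\<forall>x\<in>X. ((\<lambda>(x,y). ftilde f \<rho> x y) has_derivative (\<lambda>(dx,dy). inner (gtx x yp) dx + inner (gty x yp) dy)) (at (x,yp))"
      using grad_ftilde ypY by blast
    show "\<forall>x\<in>X. norm (gtx x yt - gtx x yp) \<le> l * norm (yt - yp)"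
      using l_lipx yt ypY by fastforce
  qed
  define e where "e = norm (xt - x1)"
  define d where "d = norm (yp - yt)"
  have a4: "(p - l) * e\<^sup>2 \<le> l * d * e"
  proof -
    have "?fh x1 yt - ?fh xt yt + (?fh xt yp - ?fh x1 yp)
        = (ftilde f \<rho> x1 yt - ftilde f \<rho> x1 yp) - (ftilde f \<rho> xt yt - ftilde f \<rho> xt yp)"
      by (simp add: fhat_def)
    moreover have E: "norm (x1 - xt) = e" "norm (yt - yp) = d"
      by (simp_all add: e_def d_def norm_minus_commute)
    moreover have "?c * e\<^sup>2 \<le> ?fh x1 yt - ?fh xt yt" using gryt E by simp
    moreover have "?c * e\<^sup>2 \<le> ?fh xt yp - ?fh x1 yp" using gryp by (simp add: e_def)
    moreover have "(ftilde f \<rho> x1 yt - ftilde f \<rho> x1 yp) - (ftilde f \<rho> xt yt - ftilde f \<rho> xt yp) \<le> l * d * e"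
      using mvt E by simp
    moreover have "(p - l) * e\<^sup>2 = ?c * e\<^sup>2 + ?c * e\<^sup>2" by simp
    ultimately show ?thesis by linarith
  qed
  have gid: "gty x y = gy (Amap x) y" if "x \<in> X" "y \<in> Y" for x y
  proof -
    have 1: "((\<lambda>w. ftilde f \<rho> x w) has_derivative (\<lambda>dw. inner (gty x y) dw)) (at y)"
      by (rule partial_y[where G="gtx x y"]) (use grad_ftilde that in auto)
    have 2: "((\<lambda>w. f (Amap x) w) has_derivative (\<lambda>dw. inner (gy (Amap x) y) dw)) (at y)"
      by (rule partial_y[OF fder[OF that]])
    have 3: "((\<lambda>w. ftilde f \<rho> x w) has_derivative (\<lambda>dw. inner (gy (Amap x) y) dw)) (at y)"
      unfolding ftilde_def by (rule has_derivative_add_const[OF 2])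
    show ?thesis by (rule grad_unique[OF 1 3])
  qed
  define v where "v = yt + \<tau>2 *\<^sub>R gty xt yt"
  define g where "g = (1/\<tau>2) *\<^sub>R (v - yp)"
  have gsub: "g \<in> frechet_subdiff Y h yp"
    unfolding g_def v_def by (rule prox_subgrad[OF tau_pos yp])
  have A3i: "(SUP w\<in>Y. f (Amap x1) w - h w) - (f (Amap x1) yp - h yp)
          \<le> 1 / (2 * \<mu>) * (infdist 0 ((\<lambda>g. - gy (Amap x1) yp + g) ` frechet_subdiff Y h yp))\<^sup>2"
    using A3 AX[OF x1X] ypY gsub by blast
  define N where "N = norm (- gy (Amap x1) yp + g)"
  have "infdist 0 ((\<lambda>g. - gy (Amap x1) yp + g) ` frechet_subdiff Y h yp) \<le> N"
    using infdist_le[OF imageI[OF gsub, of "\<lambda>g. - gy (Amap x1) yp + g"], of 0] by (simp add: N_def dist_norm norm_minus_commute)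
  then have "(infdist 0 ((\<lambda>g. - gy (Amap x1) yp + g) ` frechet_subdiff Y h yp))\<^sup>2 \<le> N\<^sup>2"
    by (intro power_mono infdist_nonneg)
  then have A3N: "(SUP w\<in>Y. fr x1 w) - fr x1 yp \<le> 1 / (2 * \<mu>) * N\<^sup>2"
    using A3i A3_mu unfolding fr_def by (smt (verit) mult_left_mono divide_nonneg_pos zero_le_one)
  have a1: "(p - l)/2 * (norm (x1 - xs))\<^sup>2 \<le> 1 / (2 * \<mu>) * N\<^sup>2"
  proof -
    have "?Ph xs \<ge> ?fh xs yp - h yp" by (rule Phi_upper[OF xsX ypY])
    moreover have "?fh xs yp \<ge> ?fh x1 yp" by (rule x1min[OF xsX])
    moreover have "?Ph x1 - (?fh x1 yp - h yp) = (SUP w\<in>Y. fr x1 w) - fr x1 yp"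
      unfolding Phi_eq[OF x1X] fhat_eq by simp
    ultimately show ?thesis using grPhi A3N by linarith
  qed
  define M where "M = norm (gty xt yt - gty x1 yp)"
  have a3: "M \<le> l * e + l * d"
    using l_lipy xtX yt x1X ypY unfolding M_def e_def d_def by (metis norm_minus_commute)
  have a2: "N \<le> d / \<tau>2 + M"
  proof -
    have "- gy (Amap x1) yp + g = (1/\<tau>2) *\<^sub>R (yt - yp) + (gty xt yt - gty x1 yp)"
      using tau_pos unfolding g_def v_def gid[OF x1X ypY] by (simp add: algebra_simps)
    then have "N \<le> norm ((1/\<tau>2) *\<^sub>R (yt - yp)) + M" unfolding N_def M_def by (metis norm_triangle_ineq)
    moreover have "norm ((1/\<tau>2) *\<^sub>R (yt - yp)) = d / \<tau>2"
      using tau_pos by (simp add: d_def norm_minus_commute)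
    ultimately show ?thesis by simp
  qed
  show ?thesis unfolding d_def[symmetric]
    by (rule final_alg[OF A3_mu p_l tau_pos _ _ _ a1 a2 a3 a4]) (auto simp: d_def e_def N_def)
qed

end
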